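(* Under all hypotheses of Proposition 1 (stated in the context below), suppose in addition that $P\big(y_j^\star(T)=0\big)=0$ for every $j=1,\dots,m$. Then $$P\Big(\exists s\in[0,T]:\ \hat y^n(s)\notin\Omega_-\Big)\ \longrightarrow\ P\Big(\exists s\in[0,T]:\ x(s)\notin X_{\mathrm{safe}}\Big)\quad(n\to\infty),$$ where $X_{\mathrm{safe}}=\{x: g_j(x)\le0\ \forall j\}$ and $\Omega_-$ is the non-positive orthant of $\mathbb{R}^m$.
   Context: Hypotheses of Proposition 1: $x(t)$ solves the Itô SDE $dx=f(t,x,u)dt+G(t,x,u)dw$ on $[0,T]$ with $w$ a standard Brownian motion and $u$ a progressively measurable control; $g_1,\dots,g_m$ are $C^2$ with gradients $a_j$, Hessians $H_j$; for each $j$, either $u(t)=\kappa(t,x(t))$ with $\kappa$ deterministic Lipschitz, or $a_j^\top f$ and $a_j^\top G$ do not depend on $u$; for each $j$, either ($G$ constant and $a_j$ Lipschitz) or ($a_j$ constant and $G$ Lipschitz) or ($a_j$ and $G$ bounded and Lipschitz); $f_t=f(t,x(t),u(t))$ is pathwise bounded a.s. with $\mathbb{E}\int_0^T\|f_t\|^2dt<\infty$; $G_t=G(t,x(t),u(t))$ has $\mathbb{E}\|G_t\|^2$ bounded on $[0,T]$ and $\mathbb{E}\int_0^T\|G_t\|^2dt<\infty$; partitions $\mathcal{P}_n=\{0=t_0<\dots<t_{k_n}=T\}$ have mesh $\delta_n\to0$ with $k_n\delta_n\le cT$. $y(t)=(g_j(x(t)))_j$; $y_j^\star(T)=\sup_{s\in[0,T]}y_j(s)$.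 $\hat y^n(s)\triangleq y(t)+(s-t)h_t+\Sigma_t(w(s)-w(t))$ with $t=\max\{t_i\in\mathcal{P}_n:t_i\le s\}$, $h_{t,j}=a_j(x(t))^\top f_t+\frac12\mathrm{tr}(G_t^\top H_j(x(t))G_t)$, and $\Sigma_t$ the matrix with rows $a_j(x(t))^\top G_t$. *)

theory Defs
  imports "HOL-Probability.Probability"
begin

definition filtered_ps :: "'a measure \<Rightarrow> (real \<Rightarrow> 'a measure) \<Rightarrow> bool" where
  "filtered_ps M F \<longleftrightarrow> prob_space M \<and> filtration (space M) F \<and> (\<forall>t. sets (F t) \<subseteq> sets M)"

definition std_brownian :: "'a measure \<Rightarrow> (real \<Rightarrow> 'a measure) \<Rightarrow> (real \<Rightarrow> 'a \<Rightarrow> real^'p) \<Rightarrow> bool" where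
  "std_brownian M F w \<longleftrightarrow>
     (\<forall>\<omega>\<in>space M. w 0 \<omega> = 0) \<and>
     (\<forall>\<omega>\<in>space M. continuous_on {0..} (\<lambda>t. w t \<omega>)) \<and>
     (\<forall>t\<ge>0. w t \<in> borel_measurable (F t)) \<and>
     (\<forall>s t. 0 \<le> s \<and> s < t \<longrightarrow>
        prob_space.indep_vars M (\<lambda>_. borel) (\<lambda>i \<omega>. (w t \<omega> - w s \<omega>) $ i) (UNIV :: 'p set) \<and>
        (\<forall>i. distributed M lborel (\<lambda>\<omega>. (w t \<omega> - w s \<omega>) $ i)
               (\<lambda>z. ennreal (normal_density 0 (sqrt (t - s)) z))) \<and>
        (\<forall>A\<in>sets (F s). \<forall>B\<in>sets (borel :: (real^'p) measure).
            measure M (A \<inter> {\<omega>\<in>space M. w t \<omega> - w s \<omega> \<in> B})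
              = measure M A * measure M {\<omega>\<in>space M. w t \<omega> - w s \<omega> \<in> B}))"

definition progressive :: "(real \<Rightarrow> 'a measure) \<Rightarrow> (real \<Rightarrow> 'a \<Rightarrow> 'b::topological_space) \<Rightarrow> bool" where
  "progressive F X \<longleftrightarrow>
     (\<forall>t\<ge>0. (\<lambda>(s, \<omega>). X s \<omega>) \<in> borel_measurable (restrict_space lborel {0..t} \<Otimes>\<^sub>M F t))"

definition simple_proc :: "(nat \<Rightarrow> real) \<Rightarrow> nat \<Rightarrow> (nat \<Rightarrow> 'a \<Rightarrow> real^'p^'d) \<Rightarrow> real \<Rightarrow> 'a \<Rightarrow> real^'p^'d" where
  "simple_proc r N \<xi> s \<omega> = (\<Sum>i<N. indicator {r i..<r (Suc i)} s *\<^sub>R \<xi> i \<omega>)"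

definition simple_ito :: "(nat \<Rightarrow> real) \<Rightarrow> nat \<Rightarrow> (nat \<Rightarrow> 'a \<Rightarrow> real^'p^'d) \<Rightarrow> (real \<Rightarrow> 'a \<Rightarrow> real^'p)
     \<Rightarrow> real \<Rightarrow> 'a \<Rightarrow> real^'d" where
  "simple_ito r N \<xi> w t \<omega> = (\<Sum>i<N. \<xi> i \<omega> *v (w (min t (r (Suc i))) \<omega> - w (min t (r i)) \<omega>))"

definition simple_adapted :: "'a measure \<Rightarrow> (real \<Rightarrow> 'a measure) \<Rightarrow> real \<Rightarrow> (nat \<Rightarrow> real) \<Rightarrow> nat
     \<Rightarrow> (nat \<Rightarrow> 'a \<Rightarrow> real^'p^'d) \<Rightarrow> bool" where
  "simple_adapted M F T r N \<xi> \<longleftrightarrow> r 0 = 0 \<and> r N = T \<and> (\<forall>i<N. r i < r (Suc i)) \<and>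
     (\<forall>i<N. \<xi> i \<in> borel_measurable (F (r i)) \<and> (\<exists>B. \<forall>\<omega>\<in>space M. norm (\<xi> i \<omega>) \<le> B))"

definition ito_integral :: "'a measure \<Rightarrow> (real \<Rightarrow> 'a measure) \<Rightarrow> (real \<Rightarrow> 'a \<Rightarrow> real^'p) \<Rightarrow> real
     \<Rightarrow> (real \<Rightarrow> 'a \<Rightarrow> real^'p^'d) \<Rightarrow> (real \<Rightarrow> 'a \<Rightarrow> real^'d) \<Rightarrow> bool" where
  "ito_integral M F w T G I \<longleftrightarrow>
     progressive F G \<and>
     (\<integral>\<^sup>+\<omega>. (\<integral>\<^sup>+s\<in>{0..T}. ennreal ((norm (G s \<omega>))\<^sup>2) \<partial>lborel) \<partial>M) < \<infinity> \<and>
     (\<exists>r N \<xi>. (\<forall>k. simple_adapted M F T (r k) (N k) (\<xi> k)) \<and>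
        (\<lambda>k. \<integral>\<^sup>+\<omega>. (\<integral>\<^sup>+s\<in>{0..T}. ennreal ((norm (simple_proc (r k) (N k) (\<xi> k) s \<omega> - G s \<omega>))\<^sup>2)
               \<partial>lborel) \<partial>M) \<longlonglongrightarrow> 0 \<and>
        (\<forall>t\<in>{0..T}. (\<lambda>k. \<integral>\<^sup>+\<omega>. ennreal ((norm (simple_ito (r k) (N k) (\<xi> k) w t \<omega> - I t \<omega>))\<^sup>2) \<partial>M)
               \<longlonglongrightarrow> 0))"

definition sde_solution :: "'a measure \<Rightarrow> (real \<Rightarrow> 'a measure) \<Rightarrow> (real \<Rightarrow> 'a \<Rightarrow> real^'p) \<Rightarrow> real
     \<Rightarrow> (real \<Rightarrow> real^'d \<Rightarrow> 'u \<Rightarrow> real^'d) \<Rightarrow> (real \<Rightarrow> real^'d \<Rightarrow> 'u \<Rightarrow> real^'p^'d)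
     \<Rightarrow> (real \<Rightarrow> 'a \<Rightarrow> 'u) \<Rightarrow> (real \<Rightarrow> 'a \<Rightarrow> real^'d) \<Rightarrow> bool" where
  "sde_solution M F w T f G u x \<longleftrightarrow>
     (\<forall>\<omega>\<in>space M. continuous_on {0..T} (\<lambda>t. x t \<omega>)) \<and>
     (\<forall>t\<in>{0..T}. x t \<in> borel_measurable (F t)) \<and>
     (\<exists>I. ito_integral M F w T (\<lambda>s \<omega>. G s (x s \<omega>) (u s \<omega>)) I \<and>
        (\<forall>t\<in>{0..T}. AE \<omega> in M.
           x t \<omega> = x 0 \<omega> + (LINT s:{0..t}|lborel. f s (x s \<omega>) (u s \<omega>)) + I t \<omega>))"

definition is_partition :: "real \<Rightarrow> (nat \<Rightarrow> real) \<Rightarrow> nat \<Rightarrow> bool" where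
  "is_partition T tp k \<longleftrightarrow> tp 0 = 0 \<and> tp k = T \<and> (\<forall>i<k. tp i < tp (Suc i))"

definition mesh :: "(nat \<Rightarrow> real) \<Rightarrow> nat \<Rightarrow> real" where
  "mesh tp k = Max ((\<lambda>i. tp (Suc i) - tp i) ` {..<k})"

definition last_grid :: "(nat \<Rightarrow> real) \<Rightarrow> nat \<Rightarrow> real \<Rightarrow> real" where
  "last_grid tp k s = Max {tp i | i. i \<le> k \<and> tp i \<le> s}"

text \<open>The piecewise approximation yhat^n of y(s) = (g_j(x(s)))_j.\<close>
definition yhat :: "(nat \<Rightarrow> real) \<Rightarrow> nat \<Rightarrow> ('m \<Rightarrow> real^'d \<Rightarrow> real) \<Rightarrow> ('m \<Rightarrow> real^'d \<Rightarrow> real^'d)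
     \<Rightarrow> ('m \<Rightarrow> real^'d \<Rightarrow> real^'d^'d) \<Rightarrow> (real \<Rightarrow> real^'d \<Rightarrow> 'u \<Rightarrow> real^'d)
     \<Rightarrow> (real \<Rightarrow> real^'d \<Rightarrow> 'u \<Rightarrow> real^'p^'d) \<Rightarrow> (real \<Rightarrow> 'a \<Rightarrow> 'u) \<Rightarrow> (real \<Rightarrow> 'a \<Rightarrow> real^'d)
     \<Rightarrow> (real \<Rightarrow> 'a \<Rightarrow> real^'p) \<Rightarrow> real \<Rightarrow> 'a \<Rightarrow> real^'m" where
  "yhat tp k g a H f G u x w s \<omega> =
     (let t = last_grid tp k s;
          xt = x t \<omega>; ft = f t xt (u t \<omega>); Gt = G t xt (u t \<omega>);
          y = (\<chi> j. g j xt);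
          h = (\<chi> j. a j xt \<bullet> ft + 1/2 * trace (transpose Gt ** H j xt ** Gt));
          \<Sigma> = (\<chi> j. a j xt v* Gt)
      in y + (s - t) *\<^sub>R h + \<Sigma> *v (w s \<omega> - w t \<omega>))"

definition lipschitz_fun :: "('b::metric_space \<Rightarrow> 'c::metric_space) \<Rightarrow> bool" where
  "lipschitz_fun h \<longleftrightarrow> (\<exists>L. \<forall>p q. dist (h p) (h q) \<le> L * dist p q)"

end

theory Submission
  imports Defs
begin

lemma tp_less:
  assumes "is_partition T tp k" "i < j" "j \<le> k"
  shows "tp i < tp j"
  using assms(2,3)
proof (induction j)
  case 0 then show ?case by simp
next
  case (Suc j)
  have "tp j < tp (Suc j)" using assms(1) Suc.prems unfolding is_partition_def by auto
  then show ?case using Suc by (cases "i = j") auto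
qed

lemma tp_le:
  assumes "is_partition T tp k" "i \<le> j" "j \<le> k"
  shows "tp i \<le> tp j"
  using tp_less[OF assms(1), of i j] assms by (cases "i = j") auto

lemma tp_range:
  assumes "is_partition T tp k" "i \<le> k"
  shows "0 \<le> tp i \<and> tp i \<le> T"
  using tp_le[OF assms(1), of 0 i] tp_le[OF assms(1), of i k] assms
  unfolding is_partition_def by auto

lemma last_grid_eq:
  assumes P: "is_partition T tp k" and ik: "i \<le> k" and le: "tp i \<le> s"
    and up: "i < k \<Longrightarrow> s < tp (Suc i)"
  shows "last_grid tp k s = tp i"
proof -
  let ?S = "{tp i | i. i \<le> k \<and> tp i \<le> s}"
  have fin: "finite ?S" by simp
  have mem: "tp i \<in> ?S" using ik le by auto
  have ub: "y \<le> tp i" if yS: "y \<in> ?S" for y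
  proof -
    obtain l where l: "y = tp l" "l \<le> k" "tp l \<le> s" using yS by blast
    show ?thesis
    proof (cases "l \<le> i")
      case True then show ?thesis using tp_le[OF P True ik] l by simp
    next
      case False
      then have "i < k" "Suc i \<le> l" using l by auto
      then have "tp (Suc i) \<le> tp l" using tp_le[OF P _ l(2)] by simp
      then show ?thesis using up[OF \<open>i<k\<close>] l by simp
    qed
  qed
  show ?thesis unfolding last_grid_def
  proof (rule antisym)
    show "Max ?S \<le> tp i" using fin mem ub by (subst Max_le_iff) auto
    show "tp i \<le> Max ?S" using fin mem by (rule Max_ge)
  qed
qed

lemma last_grid_props:
  assumes P: "is_partition T tp k" and s: "0 \<le> s" "s \<le> T"
  shows "\<exists>i\<le>k. last_grid tp k s = tp i \<and> tp i \<le> s \<and> (i < k \<longrightarrow> s < tp (Suc i))"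
proof -
  let ?I = "{i. i \<le> k \<and> tp i \<le> s}"
  have "0 \<in> ?I" using P s unfolding is_partition_def by auto
  have fin: "finite ?I" by simp
  define i where "i = Max ?I"
  have iI: "i \<in> ?I" unfolding i_def using fin \<open>0 \<in> ?I\<close> by (intro Max_in) auto
  have "s < tp (Suc i)" if "i < k"
  proof (rule ccontr)
    assume "\<not> s < tp (Suc i)"
    then have "Suc i \<in> ?I" using that by auto
    then have "Suc i \<le> i" unfolding i_def using fin by (intro Max_ge) auto
    then show False by simp
  qed
  then show ?thesis using iI last_grid_eq[OF P, of i s] by auto
qed

lemma mesh_ge:
  assumes "i < k"
  shows "tp (Suc i) - tp i \<le> mesh tp k"
  unfolding mesh_def using assms by (intro Max_ge) auto

lemma last_grid_bounds:
  assumes P: "is_partition T tp k" and T: "T > 0" and s: "0 \<le> s" "s \<le> T"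
  shows "0 \<le> last_grid tp k s \<and> last_grid tp k s \<le> s \<and> s - last_grid tp k s \<le> mesh tp k
     \<and> last_grid tp k s \<le> T"
proof -
  obtain i where i: "i \<le> k" "last_grid tp k s = tp i" "tp i \<le> s" "i < k \<longrightarrow> s < tp (Suc i)"
    using last_grid_props[OF P s] by blast
  have k0: "k \<noteq> 0" using P T unfolding is_partition_def by (metis less_irrefl)
  have m0: "0 \<le> mesh tp k"
    using mesh_ge[of 0 k tp] tp_less[OF P, of 0 1] k0 by simp
  have "s - tp i \<le> mesh tp k"
  proof (cases "i < k")
    case True then show ?thesis using i mesh_ge[OF True, of tp] by simp
  next
    case False then have "i = k" using i by simp
    then show ?thesis using P s m0 unfolding is_partition_def by simp
  qed
  then show ?thesis using i tp_range[OF P i(1)] by simp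
qed

lemma norm_vec_le_sum: "norm (x::'a::real_normed_vector^'n) \<le> (\<Sum>i\<in>UNIV. norm (x$i))"
  unfolding norm_vec_def by (rule L2_set_le_sum) simp

lemma entry_le: "\<bar>A$i$j\<bar> \<le> norm (A::real^'n^'m)"
  using component_le_norm_cart[of "A$i" j] Finite_Cartesian_Product.norm_nth_le[of A i] by linarith

lemma norm_mat_le:
  assumes "\<And>i j. \<bar>(A::real^'n^'m)$i$j\<bar> \<le> c"
  shows "norm A \<le> real CARD('m) * (real CARD('n) * c)"
proof -
  have "norm (A$i) \<le> real CARD('n) * c" for i
  proof -
    have "norm (A$i) \<le> (\<Sum>j\<in>UNIV. \<bar>A$i$j\<bar>)" by (rule norm_le_l1_cart)
    also have "\<dots> \<le> (\<Sum>j\<in>(UNIV::'n set). c)" by (rule sum_mono) (use assms in auto)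
    finally show ?thesis by simp
  qed
  then have "(\<Sum>i\<in>UNIV. norm (A$i)) \<le> (\<Sum>i\<in>(UNIV::'m set). real CARD('n) * c)"
    by (intro sum_mono) auto
  then show ?thesis using norm_vec_le_sum[of A] by simp
qed

lemma norm_vm_le: "norm ((v::real^'m) v* (M::real^'n^'m)) \<le> real CARD('n) * (real CARD('m) * (norm v * norm M))"
proof -
  have "\<bar>(v v* M)$j\<bar> \<le> real CARD('m) * (norm v * norm M)" for j
  proof -
    have "\<bar>(v v* M)$j\<bar> = \<bar>\<Sum>i\<in>UNIV. M$i$j * v$i\<bar>" by (simp add: vector_matrix_mult_def mult.commute)
    also have "\<dots> \<le> (\<Sum>i\<in>UNIV. \<bar>M$i$j * v$i\<bar>)" by (rule sum_abs)
    also have "\<dots> \<le> (\<Sum>i\<in>(UNIV::'m set). norm v * norm M)"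
    proof (rule sum_mono)
      fix i
      have "\<bar>M$i$j\<bar> \<le> norm M" by (rule entry_le)
      moreover have "\<bar>v$i\<bar> \<le> norm v" by (rule component_le_norm_cart)
      ultimately show "\<bar>M$i$j * v$i\<bar> \<le> norm v * norm M"
        by (simp add: abs_mult mult.commute mult_mono)
    qed
    finally show ?thesis by simp
  qed
  then have "(\<Sum>j\<in>UNIV. \<bar>(v v* M)$j\<bar>) \<le> (\<Sum>j\<in>(UNIV::'n set). real CARD('m) * (norm v * norm M))"
    by (intro sum_mono) auto
  then show ?thesis using norm_le_l1_cart[of "v v* M"] by simp
qed

lemma norm_mm_le: "norm ((A::real^'k^'m) ** (B::real^'n^'k)) \<le> real CARD('m) * (real CARD('n) * (real CARD('k) * (norm A * norm B)))"
proof (rule norm_mat_le)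
  fix i j
  have "\<bar>(A ** B)$i$j\<bar> = \<bar>\<Sum>l\<in>UNIV. A$i$l * B$l$j\<bar>" by (simp add: matrix_matrix_mult_def)
  also have "\<dots> \<le> (\<Sum>l\<in>UNIV. \<bar>A$i$l * B$l$j\<bar>)" by (rule sum_abs)
  also have "\<dots> \<le> (\<Sum>l\<in>(UNIV::'k set). norm A * norm B)"
  proof (rule sum_mono)
    fix l
    have "\<bar>A$i$l\<bar> \<le> norm A" "\<bar>B$l$j\<bar> \<le> norm B" by (rule entry_le)+
    then show "\<bar>A$i$l * B$l$j\<bar> \<le> norm A * norm B" by (simp add: abs_mult mult_mono)
  qed
  finally show "\<bar>(A ** B)$i$j\<bar> \<le> real CARD('k) * (norm A * norm B)" by simp
qed

lemma norm_transpose_le: "norm (transpose (A::real^'n^'m)) \<le> real CARD('n) * (real CARD('m) * norm A)"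
  by (rule norm_mat_le) (simp add: transpose_def entry_le)

lemma trace_le: "\<bar>trace (A::real^'n^'n)\<bar> \<le> real CARD('n) * norm A"
proof -
  have "\<bar>trace A\<bar> \<le> (\<Sum>i\<in>UNIV. \<bar>A$i$i\<bar>)" unfolding trace_def by (rule sum_abs)
  also have "\<dots> \<le> (\<Sum>i\<in>(UNIV::'n set). norm A)" by (rule sum_mono) (rule entry_le)
  finally show ?thesis by simp
qed

lemma comp_mv: "((S::real^'n^'m) *v v) $ j = S$j \<bullet> v"
  by (simp add: matrix_vector_mult_def inner_vec_def)

lemma lipschitz_fun_cont: "lipschitz_fun h \<Longrightarrow> continuous_on S h"
proof -
  assume "lipschitz_fun h"
  then obtain L where L: "\<And>p q. dist (h p) (h q) \<le> L * dist p q" unfolding lipschitz_fun_def by blast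
  have "L * dist p q \<le> max L 0 * dist p q" for p q by (intro mult_right_mono) auto
  then have "(max L 0)-lipschitz_on S h" unfolding lipschitz_on_def using L by (meson max.cobounded2 order_trans)
  then show ?thesis by (rule lipschitz_on_continuous_on)
qed

lemma cont_bound:
  fixes \<phi> :: "real \<Rightarrow> 'b::real_normed_vector"
  assumes "continuous_on {0..T} \<phi>"
  shows "\<exists>K. \<forall>t\<in>{0..T}. norm (\<phi> t) \<le> K"
proof -
  have "compact (\<phi> ` {0..T})" by (rule compact_continuous_image[OF assms]) simp
  then have "bounded (\<phi> ` {0..T})" by (rule compact_imp_bounded)
  then show ?thesis unfolding bounded_iff by auto
qed

lemma trace_bound0:
  "\<bar>trace (transpose (Gm::real^'p^'d) ** (Hm::real^'d^'d) ** Gm)\<bar> \<le> (real CARD('p) * (real CARD('p) * (real CARD('p) * (real CARD('d) * (real CARD('p) * (real CARD('d) * (real CARD('d) * (real CARD('d) * real CARD('p))))))))) * (norm Gm * norm Hm * norm Gm)"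
proof -
  let ?c1 = "real CARD('p) * (real CARD('d) * (real CARD('d) * (real CARD('d) * real CARD('p))))"
  have t1: "norm (transpose Gm ** Hm) \<le> ?c1 * (norm Gm * norm Hm)"
  proof -
    have "norm (transpose Gm ** Hm) \<le> real CARD('p) * (real CARD('d) * (real CARD('d) * (norm (transpose Gm) * norm Hm)))"
      by (rule norm_mm_le)
    also have "\<dots> \<le> real CARD('p) * (real CARD('d) * (real CARD('d) * ((real CARD('p) * (real CARD('d) * norm Gm)) * norm Hm)))"
      by (intro mult_left_mono mult_right_mono norm_transpose_le) auto
    finally show ?thesis by (simp add: algebra_simps)
  qed
  have "norm (transpose Gm ** Hm ** Gm) \<le> real CARD('p) * (real CARD('p) * (real CARD('d) * (norm (transpose Gm ** Hm) * norm Gm)))"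
    by (rule norm_mm_le)
  also have "\<dots> \<le> real CARD('p) * (real CARD('p) * (real CARD('d) * ((?c1 * (norm Gm * norm Hm)) * norm Gm)))"
    by (intro mult_left_mono mult_right_mono t1) auto
  finally have "norm (transpose Gm ** Hm ** Gm) \<le> real CARD('p) * (real CARD('p) * (real CARD('d) * ((?c1 * (norm Gm * norm Hm)) * norm Gm)))" .
  moreover have "\<bar>trace (transpose Gm ** Hm ** Gm)\<bar> \<le> real CARD('p) * norm (transpose Gm ** Hm ** Gm)"
    by (rule trace_le)
  ultimately have "\<bar>trace (transpose Gm ** Hm ** Gm)\<bar> \<le> real CARD('p) * (real CARD('p) * (real CARD('p) * (real CARD('d) * ((?c1 * (norm Gm * norm Hm)) * norm Gm))))"
    by (smt (verit) mult_left_mono of_nat_0_le_iff)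
  then show ?thesis by (simp add: algebra_simps)
qed

lemma trace_bound:
  "\<exists>C\<ge>0. \<forall>(Gm::real^'p^'d) (Hm::real^'d^'d). \<bar>trace (transpose Gm ** Hm ** Gm)\<bar> \<le> C * (norm Gm * norm Hm * norm Gm)"
  by (rule exI[of _ "(real CARD('p) * (real CARD('p) * (real CARD('p) * (real CARD('d) * (real CARD('p) * (real CARD('d) * (real CARD('d) * (real CARD('d) * real CARD('p)))))))))"]) (simp add: trace_bound0)

lemma trace_bound2:
  assumes "norm (Gm::real^'p^'d) \<le> KG" "norm (Hm::real^'d^'d) \<le> KH"
  shows "\<exists>C. \<bar>trace (transpose Gm ** Hm ** Gm)\<bar> \<le> C * (KG * KH * KG) \<and> C \<ge> 0"
proof -
  obtain C where C: "C \<ge> 0" "\<bar>trace (transpose Gm ** Hm ** Gm)\<bar> \<le> C * (norm Gm * norm Hm * norm Gm)"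
    using trace_bound by blast
  have "0 \<le> KG" "0 \<le> KH" using assms norm_ge_zero order_trans by blast+
  then have "norm Gm * norm Hm * norm Gm \<le> KG * KH * KG"
    using assms by (intro mult_mono) auto
  then have "C * (norm Gm * norm Hm * norm Gm) \<le> C * (KG * KH * KG)" using C by (intro mult_left_mono) auto
  then show ?thesis using C by (intro exI[of _ C]) auto
qed

lemma yhat_comp:
  "yhat tp k g a H f G u x w s \<omega> $ j =
     (let t = last_grid tp k s; xt = x t \<omega>; Gt = G t xt (u t \<omega>) in
      g j xt + (s - t) * (a j xt \<bullet> f t xt (u t \<omega>) + 1/2 * trace (transpose Gt ** H j xt ** Gt))
        + (a j xt v* Gt) \<bullet> (w s \<omega> - w t \<omega>))"
  unfolding yhat_def Let_def by (simp add: comp_mv)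

lemma pathwise_conv:
  fixes x :: "real \<Rightarrow> 'a \<Rightarrow> real^'d" and w :: "real \<Rightarrow> 'a \<Rightarrow> real^'p"
  assumes T: "T > 0" and part: "\<And>n. is_partition T (tp n) (k n)"
    and mesh_lim: "(\<lambda>n. mesh (tp n) (k n)) \<longlonglongrightarrow> 0"
    and xc: "continuous_on {0..T} (\<lambda>t. x t \<omega>)"
    and wc: "continuous_on {0..T} (\<lambda>t. w t \<omega>)"
    and gc: "continuous_on UNIV (g j)"
    and bnd: "\<forall>t\<in>{0..T}. \<bar>a j (x t \<omega>) \<bullet> f t (x t \<omega>) (u t \<omega>) + 1/2 * trace (transpose (G t (x t \<omega>) (u t \<omega>)) ** H j (x t \<omega>) ** G t (x t \<omega>) (u t \<omega>))\<bar> \<le> K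
        \<and> norm (a j (x t \<omega>) v* G t (x t \<omega>) (u t \<omega>)) \<le> K"
    and e: "e > 0"
  shows "eventually (\<lambda>n. \<forall>s\<in>{0..T}. \<bar>yhat (tp n) (k n) g a H f G u x w s \<omega> $ j - g j (x s \<omega>)\<bar> \<le> e) sequentially"
proof -
  have K0: "0 \<le> K"
  proof -
    have "0 \<in> {0..T}" using T by simp
    then show ?thesis using bnd by (meson abs_ge_zero order_trans)
  qed
  have yc: "continuous_on {0..T} (\<lambda>t. g j (x t \<omega>))"
    using continuous_on_compose2[OF gc xc] by simp
  have yu: "uniformly_continuous_on {0..T} (\<lambda>t. g j (x t \<omega>))"
    by (rule compact_uniformly_continuous[OF yc]) simp
  have wu: "uniformly_continuous_on {0..T} (\<lambda>t. w t \<omega>)"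
    by (rule compact_uniformly_continuous[OF wc]) simp
  obtain d1 where d1: "d1 > 0" "\<And>s t. s \<in> {0..T} \<Longrightarrow> t \<in> {0..T} \<Longrightarrow> dist t s < d1 \<Longrightarrow>
      dist (g j (x t \<omega>)) (g j (x s \<omega>)) < e/3"
    using yu e unfolding uniformly_continuous_on_def by (metis divide_pos_pos zero_less_numeral)
  have e2: "e / (3 * (K + 1)) > 0" using e K0 by simp
  obtain d2 where d2: "d2 > 0" "\<And>s t. s \<in> {0..T} \<Longrightarrow> t \<in> {0..T} \<Longrightarrow> dist t s < d2 \<Longrightarrow>
      dist (w t \<omega>) (w s \<omega>) < e / (3 * (K + 1))"
    using wu e2 unfolding uniformly_continuous_on_def by metis
  have mpos: "min (min d1 d2) (e / (3 * (K + 1))) > 0" using d1 d2 e2 by simp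
  have ev: "eventually (\<lambda>n. \<bar>mesh (tp n) (k n)\<bar> < min (min d1 d2) (e / (3 * (K + 1)))) sequentially"
    using tendstoD[OF mesh_lim mpos] by (simp add: dist_real_def)
  show ?thesis
  proof (rule eventually_mono[OF ev], intro ballI)
    fix n s assume m: "\<bar>mesh (tp n) (k n)\<bar> < min (min d1 d2) (e / (3 * (K + 1)))" and s: "s \<in> {0..T}"
    define t where "t = last_grid (tp n) (k n) s"
    have lb: "0 \<le> t" "t \<le> s" "s - t \<le> mesh (tp n) (k n)" "t \<le> T"
      using last_grid_bounds[OF part T, of s n] s unfolding t_def by auto
    have tT: "t \<in> {0..T}" using lb by auto
    have dst: "dist t s < d1" "dist s t < d2" using lb m by (auto simp: dist_real_def)
    have A: "\<bar>g j (x t \<omega>) - g j (x s \<omega>)\<bar> < e/3" using d1(2)[OF s tT dst(1)] by (simp add: dist_real_def)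
    have B: "norm (w s \<omega> - w t \<omega>) \<le> e / (3 * (K + 1))"
      using d2(2)[OF tT s dst(2)] by (simp add: dist_norm)
    define hh where "hh = a j (x t \<omega>) \<bullet> f t (x t \<omega>) (u t \<omega>) + 1/2 * trace (transpose (G t (x t \<omega>) (u t \<omega>)) ** H j (x t \<omega>) ** G t (x t \<omega>) (u t \<omega>))"
    define ss where "ss = a j (x t \<omega>) v* G t (x t \<omega>) (u t \<omega>)"
    have hb: "\<bar>hh\<bar> \<le> K" "norm ss \<le> K" using bnd tT unfolding hh_def ss_def by auto
    have eq: "yhat (tp n) (k n) g a H f G u x w s \<omega> $ j - g j (x s \<omega>)
        = (g j (x t \<omega>) - g j (x s \<omega>)) + (s - t) * hh + ss \<bullet> (w s \<omega> - w t \<omega>)"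
      unfolding yhat_comp Let_def t_def[symmetric] hh_def ss_def by simp
    have C1: "\<bar>(s - t) * hh\<bar> \<le> e/3"
    proof -
      have "\<bar>(s - t) * hh\<bar> = (s - t) * \<bar>hh\<bar>" using lb by (simp add: abs_mult)
      also have "\<dots> \<le> (e / (3 * (K + 1))) * K"
        using lb m hb K0 by (intro mult_mono) auto
      also have "\<dots> \<le> e/3" using K0 e by (simp add: field_simps)
      finally show ?thesis .
    qed
    have C2: "\<bar>ss \<bullet> (w s \<omega> - w t \<omega>)\<bar> \<le> e/3"
    proof -
      have "\<bar>ss \<bullet> (w s \<omega> - w t \<omega>)\<bar> \<le> norm ss * norm (w s \<omega> - w t \<omega>)" by (rule Cauchy_Schwarz_ineq2)
      also have "\<dots> \<le> K * (e / (3 * (K + 1)))" using hb B K0 by (intro mult_mono) auto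
      also have "\<dots> \<le> e/3" using K0 e by (simp add: field_simps)
      finally show ?thesis .
    qed
    show "\<bar>yhat (tp n) (k n) g a H f G u x w s \<omega> $ j - g j (x s \<omega>)\<bar> \<le> e"
      unfolding eq using A C1 C2 by linarith
  qed
qed

lemma hs_bound:
  fixes x :: "real \<Rightarrow> 'a \<Rightarrow> real^'d"
    and f :: "real \<Rightarrow> real^'d \<Rightarrow> real^'k \<Rightarrow> real^'d"
    and G :: "real \<Rightarrow> real^'d \<Rightarrow> real^'k \<Rightarrow> real^'p^'d"
    and u :: "real \<Rightarrow> 'a \<Rightarrow> real^'k"
    and a :: "real^'d \<Rightarrow> real^'d" and H :: "real^'d \<Rightarrow> real^'d^'d"
  assumes xc: "continuous_on {0..T} (\<lambda>t. x t \<omega>)"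
    and a_deriv: "\<And>z. (a has_derivative (\<lambda>h. H z *v h)) (at z)"
    and H_cont: "continuous_on UNIV H"
    and ctrl: "(\<exists>\<kappa> :: real \<Rightarrow> real^'d \<Rightarrow> real^'k.
                      lipschitz_fun (\<lambda>(t, z). \<kappa> t z) \<and>
                      (\<forall>t\<in>{0..T}. u t \<omega> = \<kappa> t (x t \<omega>)))
                 \<or> (\<forall>t z v v'. a z v* G t z v = a z v* G t z v')"
    and reg: "((\<exists>G0. \<forall>t z v. G t z v = G0) \<and> lipschitz_fun a)
                \<or> ((\<exists>a0. \<forall>z. a z = a0) \<and> lipschitz_fun (\<lambda>((t, z), v). G t z v))
                \<or> (bounded (range a) \<and> lipschitz_fun a \<and>
                   bounded (range (\<lambda>((t, z), v). G t z v)) \<and> lipschitz_fun (\<lambda>((t, z), v). G t z v))"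
    and fB: "\<forall>t\<in>{0..T}. norm (f t (x t \<omega>) (u t \<omega>)) \<le> B"
  shows "\<exists>K. \<forall>t\<in>{0..T}. \<bar>a (x t \<omega>) \<bullet> f t (x t \<omega>) (u t \<omega>) + 1/2 * trace (transpose (G t (x t \<omega>) (u t \<omega>)) ** H (x t \<omega>) ** G t (x t \<omega>) (u t \<omega>))\<bar> \<le> K
        \<and> norm (a (x t \<omega>) v* G t (x t \<omega>) (u t \<omega>)) \<le> K"
proof -
  have ac: "continuous_on UNIV a"
    using a_deriv has_derivative_continuous continuous_at_imp_continuous_on by blast
  obtain Ka where Ka: "\<forall>t\<in>{0..T}. norm (a (x t \<omega>)) \<le> Ka"
    using cont_bound[OF continuous_on_compose2[OF ac xc]] by auto
  obtain KH where KH: "\<forall>t\<in>{0..T}. norm (H (x t \<omega>)) \<le> KH"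
    using cont_bound[OF continuous_on_compose2[OF H_cont xc]] by auto
  have af: "\<bar>a (x t \<omega>) \<bullet> f t (x t \<omega>) (u t \<omega>)\<bar> \<le> Ka * B" if t: "t \<in> {0..T}" for t
  proof -
    have 1: "\<bar>a (x t \<omega>) \<bullet> f t (x t \<omega>) (u t \<omega>)\<bar> \<le> norm (a (x t \<omega>)) * norm (f t (x t \<omega>) (u t \<omega>))"
      by (rule Cauchy_Schwarz_ineq2)
    have k1: "norm (a (x t \<omega>)) \<le> Ka" using Ka t by blast
    have k2: "norm (f t (x t \<omega>) (u t \<omega>)) \<le> B" using fB t by blast
    have "norm (a (x t \<omega>)) * norm (f t (x t \<omega>) (u t \<omega>)) \<le> Ka * B"
      using k1 k2 by (intro mult_mono) (auto intro: order_trans[OF norm_ge_zero])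
    then show ?thesis using 1 by linarith
  qed
  let ?cv = "real CARD('p) * real CARD('d)"
  have ssb: "norm (a (x t \<omega>) v* Gm) \<le> ?cv * (Ka * KG)" if t: "t \<in> {0..T}" and "norm Gm \<le> KG"
    for t and Gm :: "real^'p^'d" and KG
  proof -
    have "norm (a (x t \<omega>) v* Gm) \<le> real CARD('p) * (real CARD('d) * (norm (a (x t \<omega>)) * norm Gm))"
      by (rule norm_vm_le)
    also have "\<dots> \<le> real CARD('p) * (real CARD('d) * (Ka * KG))"
    proof -
      have "norm (a (x t \<omega>)) \<le> Ka" using Ka t by blast
      then show ?thesis using that(2) by (intro mult_left_mono mult_mono) (auto intro: order_trans[OF norm_ge_zero])
    qed
    finally show ?thesis by simp
  qed
  show ?thesis
  proof (cases "(\<exists>G0. \<forall>t z v. G t z v = G0) \<or> bounded (range (\<lambda>((t, z), v). G t z v))")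
    case True
    then have "(\<exists>G0. \<forall>t z v. G t z v = G0) \<or> bounded (range (\<lambda>((t, z), v). G t z v))"
      by blast
    then obtain KG where KG: "\<And>t z v. norm (G t z v) \<le> KG"
    proof
      assume "\<exists>G0. \<forall>t z v. G t z v = G0"
      then obtain G0 where "\<forall>t z v. G t z v = G0" by blast
      then show thesis using that[of "norm G0"] by simp
    next
      assume "bounded (range (\<lambda>((t, z), v). G t z v))"
      then obtain KG where "\<forall>y\<in>range (\<lambda>((t, z), v). G t z v). norm y \<le> KG" unfolding bounded_iff by blast
      then have "norm (G t z v) \<le> KG" for t z v by (metis (mono_tags, lifting) case_prod_conv rangeI)
      then show thesis using that by blast
    qed
    obtain C where C: "C \<ge> 0" "\<And>t. t \<in> {0..T} \<Longrightarrow> \<bar>trace (transpose (G t (x t \<omega>) (u t \<omega>)) ** H (x t \<omega>) ** G t (x t \<omega>) (u t \<omega>))\<bar> \<le> C * (KG * KH * KG)"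
    proof -
      obtain C where C: "C \<ge> 0" "\<And>Gm Hm. \<bar>trace (transpose (Gm::real^'p^'d) ** (Hm::real^'d^'d) ** Gm)\<bar> \<le> C * (norm Gm * norm Hm * norm Gm)"
        using trace_bound by metis
      show thesis
      proof (rule that[OF C(1)])
        fix t assume t: "t \<in> {0..T}"
        have "0 \<le> KG" using KG norm_ge_zero order_trans by blast
        moreover have "0 \<le> KH" using KH t norm_ge_zero order_trans by blast
        ultimately have "norm (G t (x t \<omega>) (u t \<omega>)) * norm (H (x t \<omega>)) * norm (G t (x t \<omega>) (u t \<omega>)) \<le> KG * KH * KG"
        proof -
          have g1: "norm (G t (x t \<omega>) (u t \<omega>)) \<le> KG" by (rule KG)
          have h1: "norm (H (x t \<omega>)) \<le> KH" using KH t by blast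
          have "norm (G t (x t \<omega>) (u t \<omega>)) * norm (H (x t \<omega>)) \<le> KG * KH"
            by (rule mult_mono[OF g1 h1 \<open>0 \<le> KG\<close> norm_ge_zero])
          then show ?thesis
            by (rule mult_mono[OF _ g1 mult_nonneg_nonneg[OF \<open>0 \<le> KG\<close> \<open>0 \<le> KH\<close>] norm_ge_zero])
        qed
        then show "\<bar>trace (transpose (G t (x t \<omega>) (u t \<omega>)) ** H (x t \<omega>) ** G t (x t \<omega>) (u t \<omega>))\<bar> \<le> C * (KG * KH * KG)"
          using C(2)[of "G t (x t \<omega>) (u t \<omega>)" "H (x t \<omega>)"] C(1) by (meson mult_left_mono order_trans)
      qed
    qed
    show ?thesis
    proof (intro exI[of _ "max (Ka * B + 1/2 * (C * (KG * KH * KG))) (?cv * (Ka * KG))"] ballI conjI)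
      fix t assume t: "t \<in> {0..T}"
      show "norm (a (x t \<omega>) v* G t (x t \<omega>) (u t \<omega>)) \<le> max (Ka * B + 1/2 * (C * (KG * KH * KG))) (?cv * (Ka * KG))"
        using ssb[OF t KG[of t "x t \<omega>" "u t \<omega>"]] by linarith
      show "\<bar>a (x t \<omega>) \<bullet> f t (x t \<omega>) (u t \<omega>) + 1/2 * trace (transpose (G t (x t \<omega>) (u t \<omega>)) ** H (x t \<omega>) ** G t (x t \<omega>) (u t \<omega>))\<bar> \<le> max (Ka * B + 1/2 * (C * (KG * KH * KG))) (?cv * (Ka * KG))"
        using af[OF t] C(2)[OF t] by linarith
    qed
  next
    case False
    then obtain a0 where a0: "\<And>z. a z = a0" using reg by blast
    have GL: "lipschitz_fun (\<lambda>((t, z), v). G t z v)" using reg False by blast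
    have H0: "H z = 0" for z
    proof -
      have "a = (\<lambda>_. a0)" using a0 by auto
      then have "((\<lambda>_. a0) has_derivative (\<lambda>h. H z *v h)) (at z)" using a_deriv[of z] by simp
      moreover have "((\<lambda>_. a0) has_derivative (\<lambda>h. 0)) (at z)" by (rule has_derivative_const)
      ultimately have "(\<lambda>h. H z *v h) = (\<lambda>h. 0)" by (rule has_derivative_unique)
      then show ?thesis by (simp add: matrix_eq fun_eq_iff)
    qed
    have Gc: "continuous_on UNIV (\<lambda>((t, z), v). G t z v)" by (rule lipschitz_fun_cont[OF GL])
    obtain KG where KG: "\<forall>t\<in>{0..T}. norm (a (x t \<omega>) v* G t (x t \<omega>) (u t \<omega>)) \<le> ?cv * (Ka * KG)"
    proof -
      from ctrl show thesis
      proof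
        assume "\<exists>\<kappa> :: real \<Rightarrow> real^'d \<Rightarrow> real^'k. lipschitz_fun (\<lambda>(t, z). \<kappa> t z) \<and> (\<forall>t\<in>{0..T}. u t \<omega> = \<kappa> t (x t \<omega>))"
        then obtain \<kappa> :: "real \<Rightarrow> real^'d \<Rightarrow> real^'k" where \<kappa>: "lipschitz_fun (\<lambda>(t, z). \<kappa> t z)" "\<forall>t\<in>{0..T}. u t \<omega> = \<kappa> t (x t \<omega>)"
          by blast
        have kc: "continuous_on {0..T} (\<lambda>t. \<kappa> t (x t \<omega>))"
          using continuous_on_compose2[OF lipschitz_fun_cont[OF \<kappa>(1), of UNIV] continuous_on_Pair[OF continuous_on_id xc]]
          by simp
        have pc: "continuous_on {0..T} (\<lambda>t. G t (x t \<omega>) (\<kappa> t (x t \<omega>)))"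
          using continuous_on_compose2[OF Gc continuous_on_Pair[OF continuous_on_Pair[OF continuous_on_id xc] kc]]
          by simp
        obtain KG where "\<forall>t\<in>{0..T}. norm (G t (x t \<omega>) (\<kappa> t (x t \<omega>))) \<le> KG"
          using cont_bound[OF pc] by blast
        then show thesis using that[of KG] ssb \<kappa>(2) by simp
      next
        assume ind: "\<forall>t z v v'. a z v* G t z v = a z v* G t z v'"
        have pc: "continuous_on {0..T} (\<lambda>t. G t (x t \<omega>) 0)"
          using continuous_on_compose2[OF Gc continuous_on_Pair[OF continuous_on_Pair[OF continuous_on_id xc] continuous_on_const]]
          by simp
        obtain KG where "\<forall>t\<in>{0..T}. norm (G t (x t \<omega>) 0) \<le> KG"
          using cont_bound[OF pc] by blast
        then show thesis using that[of KG] ssb ind by metis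
      qed
    qed
    show ?thesis
    proof (intro exI[of _ "max (Ka * B) (?cv * (Ka * KG))"] ballI conjI)
      fix t assume t: "t \<in> {0..T}"
      show "norm (a (x t \<omega>) v* G t (x t \<omega>) (u t \<omega>)) \<le> max (Ka * B) (?cv * (Ka * KG))"
        using KG t by fastforce
      show "\<bar>a (x t \<omega>) \<bullet> f t (x t \<omega>) (u t \<omega>) + 1/2 * trace (transpose (G t (x t \<omega>) (u t \<omega>)) ** H (x t \<omega>) ** G t (x t \<omega>) (u t \<omega>))\<bar> \<le> max (Ka * B) (?cv * (Ka * KG))"
        using af[OF t] by (simp add: H0 trace_def)
    qed
  qed
qed

lemma sub_meas:
  assumes "filtered_ps M F" "h \<in> borel_measurable (F t)"
  shows "h \<in> borel_measurable M"
proof -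
  have "subalgebra M (F t)" using assms(1) unfolding filtered_ps_def subalgebra_def
    using filtration.space_F by blast
  then show ?thesis using measurable_from_subalg assms(2) by blast
qed

lemma prog_meas:
  assumes "progressive F X" "t \<ge> 0"
  shows "X t \<in> borel_measurable (F t)"
proof -
  have m: "(\<lambda>(s, \<omega>). X s \<omega>) \<in> borel_measurable (restrict_space lborel {0..t} \<Otimes>\<^sub>M F t)"
    using assms unfolding progressive_def by blast
  have p: "Pair t \<in> measurable (F t) (restrict_space lborel {0..t} \<Otimes>\<^sub>M F t)"
    by (rule measurable_Pair1') (use assms(2) in \<open>simp add: space_restrict_space\<close>)
  have "(\<lambda>(s, \<omega>). X s \<omega>) \<circ> Pair t \<in> borel_measurable (F t)" by (rule measurable_comp[OF p m])
  then show ?thesis by (simp add: comp_def)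
qed

lemma cont_trace3: "continuous_on UNIV (\<lambda>p::(real^'p^'d) \<times> (real^'d^'d). trace (transpose (fst p) ** snd p ** fst p))"
  unfolding trace_def matrix_matrix_mult_def transpose_def
  by (simp, intro continuous_intros)

lemma meas_trace3:
  fixes A :: "'a \<Rightarrow> real^'p^'d" and B :: "'a \<Rightarrow> real^'d^'d"
  assumes "A \<in> borel_measurable M" "B \<in> borel_measurable M"
  shows "(\<lambda>\<omega>. trace (transpose (A \<omega>) ** B \<omega> ** A \<omega>)) \<in> borel_measurable M"
proof -
  have "(\<lambda>\<omega>. (A \<omega>, B \<omega>)) \<in> borel_measurable M" using assms by measurable
  from measurable_compose[OF this borel_measurable_continuous_onI[OF cont_trace3]]
  show ?thesis by simp
qed

lemma cont_vm: "continuous_on UNIV (\<lambda>p::(real^'d) \<times> (real^'p^'d). fst p v* snd p)"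
  unfolding vector_matrix_mult_def
  by (intro continuous_on_vec_lambda continuous_intros)

lemma meas_vm:
  fixes A :: "'a \<Rightarrow> real^'d" and B :: "'a \<Rightarrow> real^'p^'d"
  assumes "A \<in> borel_measurable M" "B \<in> borel_measurable M"
  shows "(\<lambda>\<omega>. A \<omega> v* B \<omega>) \<in> borel_measurable M"
proof -
  have "(\<lambda>\<omega>. (A \<omega>, B \<omega>)) \<in> borel_measurable M" using assms by measurable
  from measurable_compose[OF this borel_measurable_continuous_onI[OF cont_vm]]
  show ?thesis by simp
qed

lemma meas_fG:
  fixes f :: "real \<Rightarrow> 'c::euclidean_space \<Rightarrow> 'e::euclidean_space \<Rightarrow> 'b::euclidean_space"
  assumes "(\<lambda>((t, z), v). f t z v) \<in> borel_measurable borel"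
    and "X \<in> borel_measurable M" "U \<in> borel_measurable M"
  shows "(\<lambda>\<omega>. f t (X \<omega>) (U \<omega>)) \<in> borel_measurable M"
proof -
  have "(\<lambda>\<omega>. ((t, X \<omega>), U \<omega>)) \<in> borel_measurable M" using assms by measurable
  from measurable_compose[OF this assms(1)] show ?thesis by simp
qed

lemma RC:
  fixes \<phi> :: "real \<Rightarrow> real"
  assumes c: "continuous_on {s..b} \<phi>" and sb: "s < b" and p: "\<phi> s > c"
  shows "\<exists>q\<in>\<rat>. s < q \<and> q < b \<and> \<phi> q > c"
proof -
  have "s \<in> {s..b}" using sb by simp
  then obtain d where d: "d > 0" "\<And>x'. x' \<in> {s..b} \<Longrightarrow> dist x' s < d \<Longrightarrow> dist (\<phi> x') (\<phi> s) < \<phi> s - c"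
    using c p unfolding continuous_on_iff by (metis diff_gt_0_iff_gt)
  obtain q where q: "q \<in> \<rat>" "s < q" "q < min b (s + d)"
    using Rats_dense_in_real[of s "min b (s + d)"] sb d by auto
  have "dist (\<phi> q) (\<phi> s) < \<phi> s - c" using q by (intro d(2)) (auto simp: dist_real_def)
  then have "\<phi> q > c" by (simp add: dist_real_def)
  then show ?thesis using q by auto
qed

lemma exists_D:
  fixes \<phi> :: "real \<Rightarrow> real"
  assumes c: "continuous_on {0..T} \<phi>" and s: "s \<in> {0..T}" and p: "\<phi> s > c"
  shows "\<exists>q\<in>{q\<in>\<rat>. 0 \<le> q \<and> q \<le> T} \<union> {T}. \<phi> q > c"
proof (cases "s = T")
  case True then show ?thesis using p by auto
next
  case False
  then have sT: "s < T" using s by simp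
  have "continuous_on {s..T} \<phi>" using s by (intro continuous_on_subset[OF c]) auto
  then obtain q where "q \<in> \<rat>" "s < q" "q < T" "\<phi> q > c" using RC sT p by blast
  then show ?thesis using s by auto
qed

lemma countable_D: "countable ({q\<in>\<rat>. 0 \<le> q \<and> q \<le> (T::real)} \<union> {T})"
  using countable_rat by (auto intro: countable_subset)

lemma sup_D:
  fixes \<phi> :: "real \<Rightarrow> real"
  assumes T: "T \<ge> 0" and c: "continuous_on {0..T} \<phi>"
  shows "(SUP s\<in>{0..T}. \<phi> s) = (SUP q\<in>{q\<in>\<rat>. 0 \<le> q \<and> q \<le> T} \<union> {T}. \<phi> q)"
proof -
  let ?D = "{q\<in>\<rat>. 0 \<le> q \<and> q \<le> T} \<union> {T}"
  have bdd: "bdd_above (\<phi> ` {0..T})"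
    using compact_imp_bounded[OF compact_continuous_image[OF c]] bounded_imp_bdd_above by auto
  have sub: "?D \<subseteq> {0..T}" using T by auto
  have bddD: "bdd_above (\<phi> ` ?D)" using bdd sub by (meson bdd_above_mono image_mono)
  show ?thesis
  proof (rule antisym)
    show "(SUP s\<in>{0..T}. \<phi> s) \<le> (SUP q\<in>?D. \<phi> q)"
    proof (rule cSUP_least)
      show "{0..T} \<noteq> {}" using T by simp
      fix s assume s: "s \<in> {0..T}"
      show "\<phi> s \<le> (SUP q\<in>?D. \<phi> q)"
      proof (rule ccontr)
        assume "\<not> ?thesis"
        then have "\<phi> s > (SUP q\<in>?D. \<phi> q)" by simp
        then obtain q where q: "q \<in> ?D" "\<phi> q > (SUP q\<in>?D. \<phi> q)" using exists_D[OF c s] by blast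
        have "\<phi> q \<le> (SUP q\<in>?D. \<phi> q)" by (rule cSUP_upper[OF q(1) bddD])
        then show False using q(2) by simp
      qed
    qed
    show "(SUP q\<in>?D. \<phi> q) \<le> (SUP s\<in>{0..T}. \<phi> s)"
      by (rule cSUP_subset_mono) (use bdd sub in auto)
  qed
qed

theorem corollary1:
  fixes M :: "'a measure" and F :: "real \<Rightarrow> 'a measure"
    and w :: "real \<Rightarrow> 'a \<Rightarrow> real^'p" and T :: real
    and f :: "real \<Rightarrow> real^'d \<Rightarrow> real^'k \<Rightarrow> real^'d"
    and G :: "real \<Rightarrow> real^'d \<Rightarrow> real^'k \<Rightarrow> real^'p^'d"
    and u :: "real \<Rightarrow> 'a \<Rightarrow> real^'k" and x :: "real \<Rightarrow> 'a \<Rightarrow> real^'d"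
    and g :: "'m::finite \<Rightarrow> real^'d \<Rightarrow> real" and a :: "'m \<Rightarrow> real^'d \<Rightarrow> real^'d"
    and H :: "'m \<Rightarrow> real^'d \<Rightarrow> real^'d^'d"
    and tp :: "nat \<Rightarrow> nat \<Rightarrow> real" and k :: "nat \<Rightarrow> nat"
  assumes fps: "filtered_ps M F"
    and BM: "std_brownian M F w"
    and T_pos: "T > 0"
    and f_meas: "(\<lambda>((t, z), v). f t z v) \<in> borel_measurable borel"
    and G_meas: "(\<lambda>((t, z), v). G t z v) \<in> borel_measurable borel"
    and u_prog: "progressive F u"
    and sol: "sde_solution M F w T f G u x"
    and g_deriv: "\<And>j z. (g j has_derivative (\<lambda>h. a j z \<bullet> h)) (at z)"
    and a_deriv: "\<And>j z. (a j has_derivative (\<lambda>h. H j z *v h)) (at z)"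
    and H_cont: "\<And>j. continuous_on UNIV (H j)"
    and ctrl: "\<And>j. (\<exists>\<kappa> :: real \<Rightarrow> real^'d \<Rightarrow> real^'k.
                      lipschitz_fun (\<lambda>(t, z). \<kappa> t z) \<and>
                      (\<forall>t\<in>{0..T}. \<forall>\<omega>\<in>space M. u t \<omega> = \<kappa> t (x t \<omega>)))
                 \<or> (\<forall>t z v v'. a j z \<bullet> f t z v = a j z \<bullet> f t z v' \<and>
                               a j z v* G t z v = a j z v* G t z v')"
    and reg: "\<And>j. ((\<exists>G0. \<forall>t z v. G t z v = G0) \<and> lipschitz_fun (a j))
                \<or> ((\<exists>a0. \<forall>z. a j z = a0) \<and> lipschitz_fun (\<lambda>((t, z), v). G t z v))
                \<or> (bounded (range (a j)) \<and> lipschitz_fun (a j) \<and>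
                   bounded (range (\<lambda>((t, z), v). G t z v)) \<and> lipschitz_fun (\<lambda>((t, z), v). G t z v))"
    and f_bdd: "AE \<omega> in M. \<exists>B. \<forall>t\<in>{0..T}. norm (f t (x t \<omega>) (u t \<omega>)) \<le> B"
    and f_sq: "(\<integral>\<^sup>+\<omega>. (\<integral>\<^sup>+t\<in>{0..T}. ennreal ((norm (f t (x t \<omega>) (u t \<omega>)))\<^sup>2) \<partial>lborel) \<partial>M) < \<infinity>"
    and G_bdd: "\<exists>C. \<forall>t\<in>{0..T}. (\<integral>\<^sup>+\<omega>. ennreal ((norm (G t (x t \<omega>) (u t \<omega>)))\<^sup>2) \<partial>M) \<le> ennreal C"
    and G_sq: "(\<integral>\<^sup>+\<omega>. (\<integral>\<^sup>+t\<in>{0..T}. ennreal ((norm (G t (x t \<omega>) (u t \<omega>)))\<^sup>2) \<partial>lborel) \<partial>M) < \<infinity>"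
    and part: "\<And>n. is_partition T (tp n) (k n)"
    and mesh_lim: "(\<lambda>n. mesh (tp n) (k n)) \<longlonglongrightarrow> 0"
    and mesh_card: "\<exists>c. \<forall>n. real (k n) * mesh (tp n) (k n) \<le> c * T"
    and no_touch: "\<And>j. measure M {\<omega>\<in>space M. (SUP s\<in>{0..T}. g j (x s \<omega>)) = 0} = 0"
  shows "(\<lambda>n. measure M {\<omega>\<in>space M. \<exists>s\<in>{0..T}.
             yhat (tp n) (k n) g a H f G u x w s \<omega> \<notin> {v. \<forall>j. v $ j \<le> 0}})
         \<longlonglongrightarrow> measure M {\<omega>\<in>space M. \<exists>s\<in>{0..T}. x s \<omega> \<notin> {z. \<forall>j. g j z \<le> 0}}"
proof -
  note yhat_comp[simp del]
  have ps: "prob_space M" using fps unfolding filtered_ps_def by blast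
  interpret prob_space M by (rule ps)
  let ?D = "{q\<in>\<rat>. 0 \<le> q \<and> q \<le> T} \<union> {T}"
  have Dsub: "?D \<subseteq> {0..T}" using T_pos by auto
  have xc: "\<And>\<omega>. \<omega> \<in> space M \<Longrightarrow> continuous_on {0..T} (\<lambda>t. x t \<omega>)"
    using sol unfolding sde_solution_def by blast
  have xm: "\<And>t. t \<in> {0..T} \<Longrightarrow> x t \<in> borel_measurable M"
    using sol sub_meas[OF fps] unfolding sde_solution_def by blast
  have wc: "\<And>\<omega>. \<omega> \<in> space M \<Longrightarrow> continuous_on {0..T} (\<lambda>t. w t \<omega>)"
  proof -
    fix \<omega> assume "\<omega> \<in> space M"
    then have "continuous_on {0..} (\<lambda>t. w t \<omega>)" using BM unfolding std_brownian_def by blast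
    then show "continuous_on {0..T} (\<lambda>t. w t \<omega>)" by (rule continuous_on_subset) auto
  qed
  have wm: "\<And>t. t \<ge> 0 \<Longrightarrow> w t \<in> borel_measurable M"
    using BM sub_meas[OF fps] unfolding std_brownian_def by blast
  have um: "\<And>t. t \<ge> 0 \<Longrightarrow> u t \<in> borel_measurable M"
    using prog_meas[OF u_prog] sub_meas[OF fps] by blast
  have gc: "\<And>j. continuous_on UNIV (g j)"
    using g_deriv has_derivative_continuous continuous_at_imp_continuous_on by blast
  have ac: "\<And>j. continuous_on UNIV (a j)"
    using a_deriv has_derivative_continuous continuous_at_imp_continuous_on by blast
  have yc: "\<And>j \<omega>. \<omega> \<in> space M \<Longrightarrow> continuous_on {0..T} (\<lambda>t. g j (x t \<omega>))"
    using continuous_on_compose2[OF gc xc] by auto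
  have ym: "(\<lambda>\<omega>. yhat (tp n) (k n) g a H f G u x w q \<omega> $ j) \<in> borel_measurable M"
    if q: "q \<in> {0..T}" for n q j
  proof -
    define t where "t = last_grid (tp n) (k n) q"
    have t: "0 \<le> t" "t \<le> T" using last_grid_bounds[OF part T_pos, of q n] q unfolding t_def by auto
    have [measurable]: "x t \<in> borel_measurable M" using xm t by auto
    have [measurable]: "u t \<in> borel_measurable M" using um t by auto
    have [measurable]: "w t \<in> borel_measurable M" "w q \<in> borel_measurable M" using wm t q by auto
    have [measurable]: "(\<lambda>\<omega>. g j (x t \<omega>)) \<in> borel_measurable M"
      using measurable_compose[OF _ borel_measurable_continuous_onI[OF gc]] by measurable
    have [measurable]: "(\<lambda>\<omega>. a j (x t \<omega>)) \<in> borel_measurable M"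
      using measurable_compose[OF _ borel_measurable_continuous_onI[OF ac]] by measurable
    have [measurable]: "(\<lambda>\<omega>. H j (x t \<omega>)) \<in> borel_measurable M"
      using measurable_compose[OF _ borel_measurable_continuous_onI[OF H_cont]] by measurable
    have [measurable]: "(\<lambda>\<omega>. f t (x t \<omega>) (u t \<omega>)) \<in> borel_measurable M"
      by (rule meas_fG[OF f_meas]) measurable
    have Gm[measurable]: "(\<lambda>\<omega>. G t (x t \<omega>) (u t \<omega>)) \<in> borel_measurable M"
      by (rule meas_fG[OF G_meas]) measurable
    have [measurable]: "(\<lambda>\<omega>. trace (transpose (G t (x t \<omega>) (u t \<omega>)) ** H j (x t \<omega>) ** G t (x t \<omega>) (u t \<omega>))) \<in> borel_measurable M"
      by (rule meas_trace3) measurable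
    have [measurable]: "(\<lambda>\<omega>. a j (x t \<omega>) v* G t (x t \<omega>) (u t \<omega>)) \<in> borel_measurable M"
      by (rule meas_vm) measurable
    show ?thesis unfolding yhat_comp Let_def t_def[symmetric] by measurable
  qed
  define E where "E = {\<omega>\<in>space M. \<exists>s\<in>{0..T}. x s \<omega> \<notin> {z. \<forall>j. g j z \<le> 0}}"
  define En where "En n = {\<omega>\<in>space M. \<exists>s\<in>{0..T}.
             yhat (tp n) (k n) g a H f G u x w s \<omega> \<notin> {v. \<forall>j. v $ j \<le> 0}}" for n
  have E_eq: "E = {\<omega>\<in>space M. \<exists>j. \<exists>q\<in>?D. g j (x q \<omega>) > 0}"
  proof (rule set_eqI, rule iffI)
    fix \<omega> assume "\<omega> \<in> E"
    then obtain s j where s: "\<omega> \<in> space M" "s \<in> {0..T}" "g j (x s \<omega>) > 0"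
      unfolding E_def by (auto simp: not_le)
    then show "\<omega> \<in> {\<omega>\<in>space M. \<exists>j. \<exists>q\<in>?D. g j (x q \<omega>) > 0}"
      using exists_D[OF yc[OF s(1), of j] s(2), of 0] s(1) s(3) by blast
  next
    fix \<omega> assume "\<omega> \<in> {\<omega>\<in>space M. \<exists>j. \<exists>q\<in>?D. g j (x q \<omega>) > 0}"
    then show "\<omega> \<in> E" unfolding E_def using Dsub by (force simp: not_le)
  qed
  have En_eq: "En n = {\<omega>\<in>space M. \<exists>j. \<exists>q\<in>?D. yhat (tp n) (k n) g a H f G u x w q \<omega> $ j > 0}" for n
  proof (rule set_eqI, rule iffI)
    fix \<omega> assume "\<omega> \<in> En n"
    then obtain s j where s: "\<omega> \<in> space M" "s \<in> {0..T}" "yhat (tp n) (k n) g a H f G u x w s \<omega> $ j > 0"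
      unfolding En_def by (auto simp: not_le)
    have "\<exists>q\<in>?D. yhat (tp n) (k n) g a H f G u x w q \<omega> $ j > 0"
    proof (cases "s = T")
      case True then show ?thesis using s by auto
    next
      case False
      then have sT: "s < T" using s by simp
      obtain i where i: "i \<le> k n" "last_grid (tp n) (k n) s = tp n i" "tp n i \<le> s"
          "i < k n \<longrightarrow> s < tp n (Suc i)"
        using last_grid_props[OF part, of s n] s by auto
      have ik: "i < k n"
      proof (rule ccontr)
        assume "\<not> i < k n" then have "i = k n" using i by simp
        then show False using i sT part[of n] unfolding is_partition_def by simp
      qed
      define b where "b = tp n (Suc i)"
      have sb: "s < b" using i ik unfolding b_def by simp
      have bT: "b \<le> T" using tp_range[OF part, of "Suc i" n] ik unfolding b_def by simp
      define t where "t = tp n i"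
      define \<psi> where "\<psi> r = (let xt = x t \<omega>; Gt = G t xt (u t \<omega>) in
          g j xt + (r - t) * (a j xt \<bullet> f t xt (u t \<omega>) + 1/2 * trace (transpose Gt ** H j xt ** Gt))
          + (a j xt v* Gt) \<bullet> (w r \<omega> - w t \<omega>))" for r
      have eq: "yhat (tp n) (k n) g a H f G u x w r \<omega> $ j = \<psi> r" if "s \<le> r" "r < b" for r
      proof -
        have "last_grid (tp n) (k n) r = tp n i"
          using last_grid_eq[OF part i(1), of r] i that unfolding b_def by simp
        then show ?thesis unfolding yhat_comp \<psi>_def t_def Let_def by simp
      qed
      have wcs: "continuous_on {s..b} (\<lambda>r. w r \<omega>)"
        using wc[OF s(1)] by (rule continuous_on_subset) (use s bT in auto)
      have pc: "continuous_on {s..b} \<psi>" unfolding \<psi>_def Let_def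
        by (intro continuous_intros wcs)
      have "\<psi> s > 0" using eq[of s] sb s(3) by simp
      then obtain q where q: "q \<in> \<rat>" "s < q" "q < b" "\<psi> q > 0" using RC[OF pc sb] by blast
      have "q \<in> ?D" using q s bT by auto
      then show ?thesis using q eq[of q] by auto
    qed
    then show "\<omega> \<in> {\<omega>\<in>space M. \<exists>j. \<exists>q\<in>?D. yhat (tp n) (k n) g a H f G u x w q \<omega> $ j > 0}"
      using s by auto
  next
    fix \<omega> assume "\<omega> \<in> {\<omega>\<in>space M. \<exists>j. \<exists>q\<in>?D. yhat (tp n) (k n) g a H f G u x w q \<omega> $ j > 0}"
    then show "\<omega> \<in> En n" unfolding En_def using Dsub by (force simp: not_le)
  qed
  have gt_sets: "{\<omega>\<in>space M. c < h \<omega>} \<in> sets M" if "h \<in> borel_measurable M" for h :: "'a \<Rightarrow> real" and c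
  proof -
    have "{\<omega>\<in>space M. c < h \<omega>} = h -` {c<..} \<inter> space M" by auto
    then show ?thesis using measurable_sets[OF that, of "{c<..}"] by simp
  qed
  have cU: "countable (UNIV :: 'm set)" by (simp add: countable_finite)
  have En_sets: "En n \<in> sets M" for n
  proof -
    have "En n = (\<Union>j\<in>UNIV. \<Union>q\<in>?D. {\<omega>\<in>space M. 0 < yhat (tp n) (k n) g a H f G u x w q \<omega> $ j})"
      unfolding En_eq by auto
    also have "\<dots> \<in> sets M"
      using Dsub by (intro sets.countable_UN''[OF cU] sets.countable_UN''[OF countable_D] gt_sets ym) auto
    finally show ?thesis .
  qed
  have gxm: "(\<lambda>\<omega>. g j (x q \<omega>)) \<in> borel_measurable M" if "q \<in> {0..T}" for j q
    using measurable_compose[OF xm[OF that] borel_measurable_continuous_onI[OF gc]] .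
  have E_sets: "E \<in> sets M"
  proof -
    have "E = (\<Union>j\<in>UNIV. \<Union>q\<in>?D. {\<omega>\<in>space M. 0 < g j (x q \<omega>)})"
      unfolding E_eq by auto
    also have "\<dots> \<in> sets M"
      using Dsub by (intro sets.countable_UN''[OF cU] sets.countable_UN''[OF countable_D] gt_sets gxm) auto
    finally show ?thesis .
  qed
  have bddY: "bdd_above ((\<lambda>s. g j (x s \<omega>)) ` S)" if "\<omega> \<in> space M" "S \<subseteq> {0..T}" for j \<omega> S
  proof -
    have "bounded ((\<lambda>s. g j (x s \<omega>)) ` {0..T})"
      using compact_imp_bounded[OF compact_continuous_image[OF yc[OF that(1)]]] by simp
    then have "bdd_above ((\<lambda>s. g j (x s \<omega>)) ` {0..T})" by (rule bounded_imp_bdd_above)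
    then show ?thesis using that(2) by (meson bdd_above_mono image_mono)
  qed
  have AE_Z: "AE \<omega> in M. (SUP s\<in>{0..T}. g j (x s \<omega>)) \<noteq> 0" for j
  proof -
    define S where "S \<omega> = (SUP q\<in>?D. g j (x q \<omega>))" for \<omega>
    have Sm: "S \<in> borel_measurable M" unfolding S_def
      using Dsub by (intro borel_measurable_cSUP countable_D gxm bddY) auto
    have eqS: "(SUP s\<in>{0..T}. g j (x s \<omega>)) = S \<omega>" if "\<omega> \<in> space M" for \<omega>
      unfolding S_def using sup_D[OF _ yc[OF that]] T_pos by simp
    define Z where "Z = {\<omega>\<in>space M. (SUP s\<in>{0..T}. g j (x s \<omega>)) = 0}"
    have "Z = S -` {0} \<inter> space M" unfolding Z_def using eqS by auto
    then have Zs: "Z \<in> sets M" using measurable_sets[OF Sm, of "{0}"] by simp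
    have "measure M Z = 0" using no_touch[of j] unfolding Z_def .
    then have "emeasure M Z = 0" using emeasure_eq_measure by simp
    then have "Z \<in> null_sets M" using Zs by auto
    then show ?thesis by (rule AE_I') (auto simp: Z_def)
  qed
  have AE_good: "AE \<omega> in M. (\<exists>B. \<forall>t\<in>{0..T}. norm (f t (x t \<omega>) (u t \<omega>)) \<le> B)
      \<and> (\<forall>j. (SUP s\<in>{0..T}. g j (x s \<omega>)) \<noteq> 0)"
  proof -
    have "AE \<omega> in M. \<forall>j\<in>UNIV. (SUP s\<in>{0..T}. g j (x s \<omega>)) \<noteq> 0"
      by (rule AE_finite_allI) (auto intro: AE_Z)
    then show ?thesis using f_bdd by eventually_elim auto
  qed
  have conv: "(\<lambda>n. indicator (En n) \<omega> :: real) \<longlonglongrightarrow> indicator E \<omega>"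
    if \<omega>: "\<omega> \<in> space M" and B: "\<forall>t\<in>{0..T}. norm (f t (x t \<omega>) (u t \<omega>)) \<le> B"
      and nz: "\<forall>j. (SUP s\<in>{0..T}. g j (x s \<omega>)) \<noteq> 0" for \<omega> B
  proof -
    have pc: "eventually (\<lambda>n. \<forall>s\<in>{0..T}. \<bar>yhat (tp n) (k n) g a H f G u x w s \<omega> $ j - g j (x s \<omega>)\<bar> \<le> e) sequentially"
      if e: "e > 0" for j e
    proof -
      have ctrl': "(\<exists>\<kappa> :: real \<Rightarrow> real^'d \<Rightarrow> real^'k.
                      lipschitz_fun (\<lambda>(t, z). \<kappa> t z) \<and> (\<forall>t\<in>{0..T}. u t \<omega> = \<kappa> t (x t \<omega>)))
                 \<or> (\<forall>t z v v'. a j z v* G t z v = a j z v* G t z v')"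
        using ctrl[of j] \<omega> by blast
      obtain K where K: "\<forall>t\<in>{0..T}. \<bar>a j (x t \<omega>) \<bullet> f t (x t \<omega>) (u t \<omega>) + 1/2 * trace (transpose (G t (x t \<omega>) (u t \<omega>)) ** H j (x t \<omega>) ** G t (x t \<omega>) (u t \<omega>))\<bar> \<le> K
        \<and> norm (a j (x t \<omega>) v* G t (x t \<omega>) (u t \<omega>)) \<le> K"
        using hs_bound[where x=x and \<omega>=\<omega> and T=T and a="a j" and H="H j" and G=G and u=u and f=f and B=B, OF xc[OF \<omega>] a_deriv[of j] H_cont[of j] ctrl' reg[of j] B] by blast
      show ?thesis by (rule pathwise_conv[where x=x and \<omega>=\<omega> and a=a and H=H and G=G and u=u and f=f and w=w and g=g and j=j, OF T_pos part mesh_lim xc[OF \<omega>] wc[OF \<omega>] gc[of j] K e])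
    qed
    define Y where "Y j = (SUP s\<in>{0..T}. g j (x s \<omega>))" for j
    have ne: "{0..T} \<noteq> {}" using T_pos by simp
    show ?thesis
    proof (cases "\<exists>j. Y j > 0")
      case True
      then obtain j where "Y j > 0" by blast
      then obtain s where s: "s \<in> {0..T}" "g j (x s \<omega>) > 0"
        unfolding Y_def using less_cSUP_iff[OF ne bddY[OF \<omega> order_refl]] by blast
      have inE: "\<omega> \<in> E" unfolding E_def using \<omega> s by (auto simp: not_le)
      define e0 where "e0 = g j (x s \<omega>) / 2"
      have e0: "e0 > 0" using s unfolding e0_def by simp
      have "eventually (\<lambda>n. \<omega> \<in> En n) sequentially"
      proof (rule eventually_mono[OF pc[OF e0, of j]])
        fix n assume "\<forall>s\<in>{0..T}. \<bar>yhat (tp n) (k n) g a H f G u x w s \<omega> $ j - g j (x s \<omega>)\<bar> \<le> e0"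
        then have "\<bar>yhat (tp n) (k n) g a H f G u x w s \<omega> $ j - g j (x s \<omega>)\<bar> \<le> e0" using s by blast
        then have "yhat (tp n) (k n) g a H f G u x w s \<omega> $ j > 0" using s unfolding e0_def by linarith
        then show "\<omega> \<in> En n" unfolding En_def using \<omega> s by (auto simp: not_le)
      qed
      then have "eventually (\<lambda>n. indicator (En n) \<omega> = (indicator E \<omega> :: real)) sequentially"
        by eventually_elim (use inE in simp)
      then show ?thesis by (rule tendsto_eventually)
    next
      case False
      then have Yneg: "Y j < 0" for j using nz unfolding Y_def by (metis linorder_neqE_linordered_idom)
      have gle: "g j (x s \<omega>) \<le> Y j" if "s \<in> {0..T}" for j s
        unfolding Y_def by (rule cSUP_upper[OF that bddY[OF \<omega> order_refl]])
      have notE: "\<omega> \<notin> E"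
      proof -
        have "g j (x s \<omega>) \<le> 0" if "s \<in> {0..T}" for s j using gle[OF that, of j] Yneg[of j] by linarith
        then show ?thesis unfolding E_def by blast
      qed
      have "eventually (\<lambda>n. \<forall>j. \<forall>s\<in>{0..T}. \<bar>yhat (tp n) (k n) g a H f G u x w s \<omega> $ j - g j (x s \<omega>)\<bar> \<le> - Y j / 2) sequentially"
        by (rule eventually_all_finite, rule pc) (use Yneg in auto)
      then have "eventually (\<lambda>n. \<omega> \<notin> En n) sequentially"
      proof (rule eventually_mono)
        fix n assume A: "\<forall>j. \<forall>s\<in>{0..T}. \<bar>yhat (tp n) (k n) g a H f G u x w s \<omega> $ j - g j (x s \<omega>)\<bar> \<le> - Y j / 2"
        have "yhat (tp n) (k n) g a H f G u x w s \<omega> $ j \<le> 0" if "s \<in> {0..T}" for s j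
        proof -
          have "\<bar>yhat (tp n) (k n) g a H f G u x w s \<omega> $ j - g j (x s \<omega>)\<bar> \<le> - Y j / 2" using A that by blast
          then show ?thesis using gle[OF that, of j] Yneg[of j] by linarith
        qed
        then show "\<omega> \<notin> En n" unfolding En_def by auto
      qed
      then have "eventually (\<lambda>n. indicator (En n) \<omega> = (indicator E \<omega> :: real)) sequentially"
        by eventually_elim (use notE in simp)
      then show ?thesis by (rule tendsto_eventually)
    qed
  qed
  have lim: "(\<lambda>n. integral\<^sup>L M (indicator (En n) :: 'a \<Rightarrow> real)) \<longlonglongrightarrow> integral\<^sup>L M (indicator E)"
  proof (rule integral_dominated_convergence[where w="\<lambda>_. 1"])
    show "indicator E \<in> borel_measurable M" using E_sets by simp
    show "indicator (En n) \<in> borel_measurable M" for n using En_sets by simp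
    show "integrable M (\<lambda>_. 1::real)" by simp
    show "AE \<omega> in M. (\<lambda>n. indicator (En n) \<omega> :: real) \<longlonglongrightarrow> indicator E \<omega>"
      using AE_good AE_space by eventually_elim (use conv in blast)
    show "AE \<omega> in M. norm (indicator (En n) \<omega> :: real) \<le> 1" for n
      by (auto simp: indicator_def)
  qed
  have "En n \<inter> space M = En n" for n unfolding En_def by auto
  moreover have "E \<inter> space M = E" unfolding E_def by auto
  ultimately show ?thesis using lim unfolding En_def E_def by simp
qed

end
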